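(* Let $\sigma\in(0,1]$, let $x_1<\dots<x_N$, $J=[x_1,x_N]$, $T=\{1,\dots,N-1\}$, and let $f,b\in\mathcal{H}^\sigma(J)$ and $\alpha_k\in\mathcal{H}^\sigma(J)$ for all $k\in T$, with $b(x_1)=f(x_1)$, $b(x_N)=f(x_N)$, $b\neq f$ and $\max_{t\in J}|\alpha_k(t)|<1$ for each $k$. Let $c=\min\{a_k:k\in T\}$. If $\|\alpha\|_{\mathcal{H}}/c^\sigma<1$, then the $\alpha$-fractal function $f^\alpha$ is Hölder continuous with exponent $\sigma$.
   Context: $\mathcal{H}^\sigma(J)$ is the space of functions $h:J\to\mathbb{C}$ that are Hölder continuous with exponent $\sigma$, with norm $\|h\|_{\mathcal{H}}=\|h\|_\infty+[h]_\sigma$, $[h]_\sigma=\sup_{t_1\ne t_2}|h(t_1)-h(t_2)|/|t_1-t_2|^\sigma$. For the scaling vector $\alpha=(\alpha_1,\dots,\alpha_{N-1})$: $\|\alpha\|_\infty=\max_{k\in T}\sup_{t\in J}|\alpha_k(t)|$, $[\alpha]_\sigma=\max_{k\in T}\sup_{t_1\ne t_2\in J}|\alpha_k(t_1)-\alpha_k(t_2)|/|t_1-t_2|^\sigma$, $\|\alpha\|_{\mathcal{H}}=\|\alpha\|_\infty+[\alpha]_\sigma$. Construction: $J_k=[x_k,x_{k+1}]$, $P_k(t)=a_kt+d_k$ with $P_k(x_1)=x_k$, $P_k(x_N)=x_{k+1}$ (so $a_k=(x_{k+1}-x_k)/(x_N-x_1)$). The $\alpha$-fractal function $f^\alpha:J\to\mathbb{C}$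 is the unique continuous function whose graph is the attractor of the IFS $\{J\times\mathbb{C};W_k(t,y)=(P_k(t),\alpha_k(t)y+f(P_k(t))-\alpha_k(t)b(t)),\ k\in T\}$; equivalently it is the continuous function satisfying $f^\alpha(t)=f(t)+\alpha_k(P_k^{-1}(t))\,(f^\alpha-b)(P_k^{-1}(t))$ for $t\in J_k$, $k\in T$. *)

theory Defs
  imports "HOL-Analysis.Analysis"
begin

definition holder_on :: "real \<Rightarrow> real set \<Rightarrow> (real \<Rightarrow> 'a::real_normed_vector) \<Rightarrow> bool" where
  "holder_on \<sigma> J h \<longleftrightarrow>
     (\<exists>C. \<forall>t1\<in>J. \<forall>t2\<in>J. norm (h t1 - h t2) \<le> C * \<bar>t1 - t2\<bar> powr \<sigma>)"

definition holder_seminorm :: "real \<Rightarrow> real set \<Rightarrow> (real \<Rightarrow> 'a::real_normed_vector) \<Rightarrow> real" where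
  "holder_seminorm \<sigma> J h =
     (SUP p\<in>{(t1,t2). t1 \<in> J \<and> t2 \<in> J \<and> t1 \<noteq> t2}.
        norm (h (fst p) - h (snd p)) / \<bar>fst p - snd p\<bar> powr \<sigma>)"

definition sup_norm_on :: "real set \<Rightarrow> (real \<Rightarrow> 'a::real_normed_vector) \<Rightarrow> real" where
  "sup_norm_on J h = (SUP t\<in>J. norm (h t))"

definition Jint :: "nat \<Rightarrow> (nat \<Rightarrow> real) \<Rightarrow> real set" where
  "Jint N x = {x 1 .. x N}"

definition Tset :: "nat \<Rightarrow> nat set" where
  "Tset N = {1..<N}"

text \<open>P_k(t) = a_k t + d_k with P_k(x_1) = x_k, P_k(x_N) = x_(k+1).\<close>
definition a_coef :: "nat \<Rightarrow> (nat \<Rightarrow> real) \<Rightarrow> nat \<Rightarrow> real" where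
  "a_coef N x k = (x (Suc k) - x k) / (x N - x 1)"

definition d_coef :: "nat \<Rightarrow> (nat \<Rightarrow> real) \<Rightarrow> nat \<Rightarrow> real" where
  "d_coef N x k = x k - a_coef N x k * x 1"

definition P_map :: "nat \<Rightarrow> (nat \<Rightarrow> real) \<Rightarrow> nat \<Rightarrow> real \<Rightarrow> real" where
  "P_map N x k t = a_coef N x k * t + d_coef N x k"

definition P_inv :: "nat \<Rightarrow> (nat \<Rightarrow> real) \<Rightarrow> nat \<Rightarrow> real \<Rightarrow> real" where
  "P_inv N x k t = (t - d_coef N x k) / a_coef N x k"

definition alpha_sup_norm :: "nat \<Rightarrow> (nat \<Rightarrow> real) \<Rightarrow> (nat \<Rightarrow> real \<Rightarrow> complex) \<Rightarrow> real" where
  "alpha_sup_norm N x \<alpha> = Max ((\<lambda>k. sup_norm_on (Jint N x) (\<alpha> k)) ` Tset N)"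

definition alpha_holder_seminorm :: "real \<Rightarrow> nat \<Rightarrow> (nat \<Rightarrow> real) \<Rightarrow> (nat \<Rightarrow> real \<Rightarrow> complex) \<Rightarrow> real" where
  "alpha_holder_seminorm \<sigma> N x \<alpha> = Max ((\<lambda>k. holder_seminorm \<sigma> (Jint N x) (\<alpha> k)) ` Tset N)"

definition alpha_holder_norm :: "real \<Rightarrow> nat \<Rightarrow> (nat \<Rightarrow> real) \<Rightarrow> (nat \<Rightarrow> real \<Rightarrow> complex) \<Rightarrow> real" where
  "alpha_holder_norm \<sigma> N x \<alpha> = alpha_sup_norm N x \<alpha> + alpha_holder_seminorm \<sigma> N x \<alpha>"

definition fractal_eq :: "nat \<Rightarrow> (nat \<Rightarrow> real) \<Rightarrow> (nat \<Rightarrow> real \<Rightarrow> complex) \<Rightarrow>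
    (real \<Rightarrow> complex) \<Rightarrow> (real \<Rightarrow> complex) \<Rightarrow> (real \<Rightarrow> complex) \<Rightarrow> bool" where
  "fractal_eq N x \<alpha> f b h \<longleftrightarrow>
     (\<forall>k\<in>Tset N. \<forall>t\<in>{x k .. x (Suc k)}.
        h t = f t + \<alpha> k (P_inv N x k t) * (h (P_inv N x k t) - b (P_inv N x k t)))"

text \<open>The alpha-fractal function f^alpha: the unique continuous function on J satisfying
  the fixed point equation (extended by 0 outside J so that it is a unique HOL function).\<close>
definition fractal_function :: "nat \<Rightarrow> (nat \<Rightarrow> real) \<Rightarrow> (nat \<Rightarrow> real \<Rightarrow> complex) \<Rightarrow>
    (real \<Rightarrow> complex) \<Rightarrow> (real \<Rightarrow> complex) \<Rightarrow> (real \<Rightarrow> complex)" where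
  "fractal_function N x \<alpha> f b =
     (THE h. continuous_on (Jint N x) h \<and> fractal_eq N x \<alpha> f b h \<and>
             (\<forall>t. t \<notin> Jint N x \<longrightarrow> h t = 0))"

end

theory Submission
  imports Defs
begin


lemma holder_nonneg:
  assumes "holder_on \<sigma> J g"
  shows "\<exists>C\<ge>0. \<forall>t1\<in>J. \<forall>t2\<in>J. norm (g t1 - g t2) \<le> C * \<bar>t1 - t2\<bar> powr \<sigma>"
proof -
  obtain C where C: "\<forall>t1\<in>J. \<forall>t2\<in>J. norm (g t1 - g t2) \<le> C * \<bar>t1 - t2\<bar> powr \<sigma>"
    using assms unfolding holder_on_def by blast
  have "\<forall>t1\<in>J. \<forall>t2\<in>J. norm (g t1 - g t2) \<le> \<bar>C\<bar> * \<bar>t1 - t2\<bar> powr \<sigma>"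
  proof (intro ballI)
    fix t1 t2 assume "t1 \<in> J" "t2 \<in> J"
    hence "norm (g t1 - g t2) \<le> C * \<bar>t1 - t2\<bar> powr \<sigma>" using C by blast
    also have "\<dots> \<le> \<bar>C\<bar> * \<bar>t1 - t2\<bar> powr \<sigma>" by (intro mult_right_mono) auto
    finally show "norm (g t1 - g t2) \<le> \<bar>C\<bar> * \<bar>t1 - t2\<bar> powr \<sigma>" .
  qed
  thus ?thesis by (intro exI[of _ "\<bar>C\<bar>"]) auto
qed

lemma holder_cont:
  assumes "holder_on \<sigma> J g" "0 < \<sigma>"
  shows "continuous_on J g"
proof -
  obtain C where C0: "C \<ge> 0" and C: "\<forall>t1\<in>J. \<forall>t2\<in>J. norm (g t1 - g t2) \<le> C * \<bar>t1 - t2\<bar> powr \<sigma>"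
    using holder_nonneg[OF assms(1)] by blast
  show ?thesis unfolding continuous_on_iff
  proof (intro ballI allI impI)
    fix t e :: real assume t: "t \<in> J" and e: "0 < e"
    define d where "d = (e / (C+1)) powr (1/\<sigma>)"
    have dpos: "d > 0" using e C0 by (simp add: d_def)
    have dd: "d powr \<sigma> = e / (C+1)" using e C0 assms(2) by (simp add: d_def powr_powr)
    show "\<exists>d>0. \<forall>x'\<in>J. dist x' t < d \<longrightarrow> dist (g x') (g t) < e"
    proof (intro exI[of _ d] conjI ballI impI dpos)
      fix y assume y: "y \<in> J" "dist y t < d"
      have "\<bar>y - t\<bar> powr \<sigma> < d powr \<sigma>"
        using y(2) assms(2) by (intro powr_less_mono2) (auto simp: dist_real_def)
      hence lt: "\<bar>y - t\<bar> powr \<sigma> < e / (C+1)" using dd by simp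
      have "dist (g y) (g t) \<le> C * \<bar>y - t\<bar> powr \<sigma>" using C y t by (simp add: dist_norm)
      also have "\<dots> \<le> (C+1) * \<bar>y - t\<bar> powr \<sigma>" by (intro mult_right_mono) auto
      also have "\<dots> < (C+1) * (e/(C+1))" using lt C0 by (intro mult_strict_left_mono) auto
      also have "\<dots> = e" using C0 by simp
      finally show "dist (g y) (g t) < e" .
    qed
  qed
qed

lemma cont_bounded:
  assumes "continuous_on J g" "compact J"
  shows "\<exists>B. \<forall>t\<in>J. norm (g t) \<le> B"
proof -
  have "bounded (g ` J)" by (rule compact_imp_bounded[OF compact_continuous_image[OF assms(1,2)]])
  thus ?thesis unfolding bounded_iff by auto
qed



locale fr =
  fixes \<sigma> :: real and N :: nat and x :: "nat \<Rightarrow> real"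
    and f b :: "real \<Rightarrow> complex" and \<alpha> :: "nat \<Rightarrow> real \<Rightarrow> complex"
    and A c Cf Cb Ca R :: real
  assumes sigma: "0 < \<sigma>" "\<sigma> \<le> 1"
    and N: "N \<ge> 2"
    and incr: "\<And>i j. 1 \<le> i \<Longrightarrow> i < j \<Longrightarrow> j \<le> N \<Longrightarrow> x i < x j"
    and Cf: "Cf \<ge> 0" "\<And>t1 t2. t1 \<in> Jint N x \<Longrightarrow> t2 \<in> Jint N x \<Longrightarrow> norm (f t1 - f t2) \<le> Cf * \<bar>t1 - t2\<bar> powr \<sigma>"
    and Cb: "Cb \<ge> 0" "\<And>t1 t2. t1 \<in> Jint N x \<Longrightarrow> t2 \<in> Jint N x \<Longrightarrow> norm (b t1 - b t2) \<le> Cb * \<bar>t1 - t2\<bar> powr \<sigma>"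
    and Ca: "Ca \<ge> 0" "\<And>k t1 t2. k \<in> Tset N \<Longrightarrow> t1 \<in> Jint N x \<Longrightarrow> t2 \<in> Jint N x \<Longrightarrow> norm (\<alpha> k t1 - \<alpha> k t2) \<le> Ca * \<bar>t1 - t2\<bar> powr \<sigma>"
    and A: "0 \<le> A" "A < 1" "\<And>k t. k \<in> Tset N \<Longrightarrow> t \<in> Jint N x \<Longrightarrow> norm (\<alpha> k t) \<le> A"
    and c: "0 < c" "\<And>k. k \<in> Tset N \<Longrightarrow> c \<le> a_coef N x k" "A / c powr \<sigma> < 1"
    and R: "R \<ge> 0" "\<And>t. t \<in> Jint N x \<Longrightarrow> norm (f t - b t) \<le> (1 - A) * R"
    and b_left: "b (x 1) = f (x 1)"
    and b_right: "b (x N) = f (x N)"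
begin

abbreviation "J \<equiv> Jint N x"
abbreviation "T \<equiv> Tset N"
abbreviation "Pv \<equiv> P_inv N x"
abbreviation "q \<equiv> A / c powr \<sigma>"

definition kof :: "real \<Rightarrow> nat" where
  "kof t = (SOME k. k \<in> T \<and> t \<in> {x k .. x (Suc k)})"

definition Ek :: "(real \<Rightarrow> complex) \<Rightarrow> nat \<Rightarrow> real \<Rightarrow> complex" where
  "Ek g k t = f t + \<alpha> k (Pv k t) * (g (Pv k t) - b (Pv k t))"

definition Tm :: "(real \<Rightarrow> complex) \<Rightarrow> real \<Rightarrow> complex" where
  "Tm g t = Ek g (kof t) t"

lemma mono_x: "1 \<le> i \<Longrightarrow> i \<le> j \<Longrightarrow> j \<le> N \<Longrightarrow> x i \<le> x j"
  using incr[of i j] by (cases "i = j") auto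

lemma x1N: "x 1 < x N" using incr[of 1 N] N by auto

lemma Tk: "k \<in> T \<Longrightarrow> 1 \<le> k \<and> Suc k \<le> N" by (auto simp: Tset_def)

lemma a_pos: "k \<in> T \<Longrightarrow> a_coef N x k > 0"
  using incr[of k "Suc k"] x1N Tk[of k] by (auto simp: a_coef_def)

lemma Pi_left: "k \<in> T \<Longrightarrow> Pv k (x k) = x 1"
  using a_pos[of k] by (simp add: P_inv_def d_coef_def)

lemma Pi_right: assumes k: "k \<in> T" shows "Pv k (x (Suc k)) = x N"
proof -
  have a: "a_coef N x k \<noteq> 0" using a_pos[OF k] by simp
  have e: "(x (Suc k) - x k) / a_coef N x k = x N - x 1"
    using x1N a by (simp add: a_coef_def)
  have "Pv k (x (Suc k)) = (x (Suc k) - x k) / a_coef N x k + x 1"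
    using a by (simp add: P_inv_def d_coef_def field_simps)
  thus ?thesis using e by simp
qed

lemma Pi_dist: "k \<in> T \<Longrightarrow> \<bar>Pv k t1 - Pv k t2\<bar> = \<bar>t1 - t2\<bar> / a_coef N x k"
  using a_pos[of k] by (simp add: P_inv_def diff_divide_distrib[symmetric])

lemma Pi_mono: "k \<in> T \<Longrightarrow> t1 \<le> t2 \<Longrightarrow> Pv k t1 \<le> Pv k t2"
  using a_pos[of k] by (simp add: P_inv_def divide_right_mono)

lemma Pi_in: "k \<in> T \<Longrightarrow> t \<in> {x k .. x (Suc k)} \<Longrightarrow> Pv k t \<in> J"
  using Pi_mono[of k "x k" t] Pi_mono[of k t "x (Suc k)"] Pi_left Pi_right
  by (auto simp: Jint_def)

lemma Jk_sub: "k \<in> T \<Longrightarrow> t \<in> {x k .. x (Suc k)} \<Longrightarrow> t \<in> J"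
  using mono_x[of 1 k] mono_x[of "Suc k" N] Tk[of k] by (auto simp: Jint_def)

lemma cover_aux: "m \<ge> 2 \<Longrightarrow> m \<le> N \<Longrightarrow> x 1 \<le> t \<Longrightarrow> t \<le> x m \<Longrightarrow> \<exists>k. 1 \<le> k \<and> k < m \<and> t \<in> {x k .. x (Suc k)}"
proof (induction m rule: nat_induct_at_least)
  case base thus ?case by (intro exI[of _ 1]) (auto simp: numeral_2_eq_2)
next
  case (Suc m)
  show ?case
  proof (cases "t \<le> x m")
    case True thus ?thesis using Suc by force
  next
    case False thus ?thesis using Suc by (intro exI[of _ m]) auto
  qed
qed

lemma cover: "t \<in> J \<Longrightarrow> \<exists>k\<in>T. t \<in> {x k .. x (Suc k)}"
  using cover_aux[of N t] N by (auto simp: Jint_def Tset_def)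

lemma kof: assumes "t \<in> J" shows "kof t \<in> T \<and> t \<in> {x (kof t) .. x (Suc (kof t))}"
proof -
  have "\<exists>k. k \<in> T \<and> t \<in> {x k .. x (Suc k)}" using cover[OF assms] by blast
  thus ?thesis unfolding kof_def by (rule someI_ex)
qed

lemma two_k: "k \<in> T \<Longrightarrow> k' \<in> T \<Longrightarrow> k < k' \<Longrightarrow> t \<in> {x k .. x (Suc k)} \<Longrightarrow> t \<in> {x k' .. x (Suc k')}
   \<Longrightarrow> t = x (Suc k) \<and> t = x k'"
  using mono_x[of "Suc k" k'] Tk[of k] Tk[of k'] by auto

definition endp :: "(real \<Rightarrow> complex) \<Rightarrow> bool" where
  "endp g \<longleftrightarrow> g (x 1) = b (x 1) \<and> g (x N) = b (x N)"

lemma Ek_node: "endp g \<Longrightarrow> k \<in> T \<Longrightarrow> t = x k \<or> t = x (Suc k) \<Longrightarrow> Ek g k t = f t"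
  unfolding Ek_def endp_def using Pi_left[of k] Pi_right[of k] by auto

lemma Tm_eq: assumes "endp g" "k \<in> T" "t \<in> {x k .. x (Suc k)}"
  shows "Tm g t = Ek g k t"
proof -
  have t: "t \<in> J" using Jk_sub assms by blast
  note k' = kof[OF t]
  show ?thesis
  proof (cases "kof t = k")
    case True thus ?thesis by (simp add: Tm_def)
  next
    case False
    hence "kof t < k \<or> k < kof t" by auto
    thus ?thesis
    proof
      assume "kof t < k"
      from two_k[OF _ assms(2) this] k' assms(3)
      have "t = x (Suc (kof t))" "t = x k" by auto
      thus ?thesis using Ek_node[OF assms(1)] k' assms(2) by (simp add: Tm_def)
    next
      assume "k < kof t"
      from two_k[OF assms(2) _ this] k' assms(3)
      have "t = x (Suc k)" "t = x (kof t)" by auto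
      thus ?thesis using Ek_node[OF assms(1)] k' assms(2) by (simp add: Tm_def)
    qed
  qed
qed

lemma Tm_endp: "endp g \<Longrightarrow> endp (Tm g)"
proof -
  assume g: "endp g"
  have T1: "1 \<in> T" "N - 1 \<in> T" using N by (auto simp: Tset_def)
  have "Tm g (x 1) = f (x 1)"
    using Tm_eq[OF g T1(1), of "x 1"] Ek_node[OF g T1(1)] x1N mono_x[of 1 2] N by (auto simp: numeral_2_eq_2)
  moreover have "Tm g (x N) = f (x N)"
    using Tm_eq[OF g T1(2), of "x N"] Ek_node[OF g T1(2)] x1N mono_x[of "N-1" N] N by auto
  ultimately show ?thesis using b_left b_right by (simp add: endp_def)
qed

end


context fr begin

definition Rb :: "(real \<Rightarrow> complex) \<Rightarrow> bool" where
  "Rb g \<longleftrightarrow> (\<forall>t\<in>J. norm (g t - b t) \<le> R)"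
definition Eb :: "real \<Rightarrow> (real \<Rightarrow> complex) \<Rightarrow> bool" where
  "Eb E g \<longleftrightarrow> (\<forall>t\<in>J. norm (g t - g (x 1)) \<le> E * \<bar>t - x 1\<bar> powr \<sigma> \<and> norm (g t - g (x N)) \<le> E * \<bar>t - x N\<bar> powr \<sigma>)"
definition Lb :: "real \<Rightarrow> (real \<Rightarrow> complex) \<Rightarrow> bool" where
  "Lb L g \<longleftrightarrow> (\<forall>t1\<in>J. \<forall>t2\<in>J. norm (g t1 - g t2) \<le> L * \<bar>t1 - t2\<bar> powr \<sigma>)"

lemma cpow: "c powr \<sigma> > 0" using c(1) by simp
lemma q_nonneg: "q \<ge> 0" using A(1) cpow by simp

lemma Pv_pow: assumes k: "k \<in> T"
  shows "\<bar>Pv k t1 - Pv k t2\<bar> powr \<sigma> \<le> \<bar>t1 - t2\<bar> powr \<sigma> / c powr \<sigma>"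
proof -
  have "\<bar>Pv k t1 - Pv k t2\<bar> powr \<sigma> = \<bar>t1 - t2\<bar> powr \<sigma> / a_coef N x k powr \<sigma>"
    using Pi_dist[OF k] by (simp add: powr_divide)
  also have "\<dots> \<le> \<bar>t1 - t2\<bar> powr \<sigma> / c powr \<sigma>"
    using c(2)[OF k] c(1) sigma cpow by (intro divide_left_mono powr_mono2 mult_pos_pos) auto
  finally show ?thesis .
qed

lemma R_step: assumes "Rb g" shows "Rb (Tm g)"
  unfolding Rb_def
proof
  fix t assume t: "t \<in> J"
  define k where "k = kof t"
  define s where "s = Pv k t"
  have k: "k \<in> T" "t \<in> {x k .. x (Suc k)}" using kof[OF t] by (auto simp: k_def)
  have s: "s \<in> J" using Pi_in[OF k] by (simp add: s_def)
  have eq: "Tm g t - b t = (f t - b t) + \<alpha> k s * (g s - b s)"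
    by (simp add: Tm_def Ek_def k_def s_def)
  have "norm (\<alpha> k s * (g s - b s)) \<le> A * R"
    unfolding norm_mult using A(3)[OF k(1) s] assms s A(1) unfolding Rb_def
    by (intro mult_mono) auto
  hence "norm (Tm g t - b t) \<le> (1 - A) * R + A * R"
    unfolding eq using R(2)[OF t] by (meson add_mono norm_triangle_le)
  thus "norm (Tm g t - b t) \<le> R" by (simp add: algebra_simps)
qed

lemma phi_bound:
  assumes g: "endp g" "Eb E g" "E \<ge> 0" and k: "k \<in> T" "t \<in> {x k .. x (Suc k)}"
    and e: "e = x k \<or> e = x (Suc k)"
  shows "norm (Ek g k t - f t) \<le> q * (E + Cb) * \<bar>t - e\<bar> powr \<sigma>"
proof -
  define s where "s = Pv k t"
  define e' where "e' = Pv k e"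
  have s: "s \<in> J" using Pi_in[OF k] by (simp add: s_def)
  have e': "e' = x 1 \<or> e' = x N" using e Pi_left[OF k(1)] Pi_right[OF k(1)] by (auto simp: e'_def)
  have e'J: "e' \<in> J" using e' x1N by (auto simp: Jint_def)
  have ge: "g e' = b e'" using e' g(1) by (auto simp: endp_def)
  have eq: "Ek g k t - f t = \<alpha> k s * ((g s - g e') - (b s - b e'))"
    using ge by (simp add: Ek_def s_def)
  have "norm ((g s - g e') - (b s - b e')) \<le> E * \<bar>s - e'\<bar> powr \<sigma> + Cb * \<bar>s - e'\<bar> powr \<sigma>"
  proof -
    have "norm (g s - g e') \<le> E * \<bar>s - e'\<bar> powr \<sigma>" using g(2) s e' unfolding Eb_def by auto
    moreover have "norm (b s - b e') \<le> Cb * \<bar>s - e'\<bar> powr \<sigma>" using Cb(2)[OF s e'J] .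
    ultimately show ?thesis by (meson add_mono norm_triangle_ineq4 order_trans)
  qed
  also have "\<dots> = (E + Cb) * \<bar>s - e'\<bar> powr \<sigma>" by (simp add: algebra_simps)
  also have "\<dots> \<le> (E + Cb) * (\<bar>t - e\<bar> powr \<sigma> / c powr \<sigma>)"
    using Pv_pow[OF k(1), of t e] g(3) Cb(1) by (intro mult_left_mono) (auto simp: s_def e'_def)
  finally have n: "norm ((g s - g e') - (b s - b e')) \<le> (E + Cb) * (\<bar>t - e\<bar> powr \<sigma> / c powr \<sigma>)" .
  have "norm (Ek g k t - f t) \<le> A * ((E + Cb) * (\<bar>t - e\<bar> powr \<sigma> / c powr \<sigma>))"
    unfolding eq norm_mult using A(3)[OF k(1) s] n A(1) by (intro mult_mono) auto
  also have "\<dots> = q * (E + Cb) * \<bar>t - e\<bar> powr \<sigma>" by simp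
  finally show ?thesis .
qed

lemma E_step:
  assumes g: "endp g" "Eb E g" "E \<ge> 0"
  shows "Eb (Cf + q * (E + Cb)) (Tm g)"
  unfolding Eb_def
proof (intro ballI conjI)
  fix t assume t: "t \<in> J"
  define k where "k = kof t"
  have k: "k \<in> T" "t \<in> {x k .. x (Suc k)}" using kof[OF t] by (auto simp: k_def)
  have x1J: "x 1 \<in> J" and xNJ: "x N \<in> J" using x1N by (auto simp: Jint_def)
  have T1: "Tm g (x 1) = f (x 1)" "Tm g (x N) = f (x N)"
    using Tm_endp[OF g(1)] b_left b_right by (auto simp: endp_def)
  have Tt: "Tm g t = Ek g k t" by (simp add: Tm_def k_def)
  have qE: "q * (E + Cb) \<ge> 0" using q_nonneg g(3) Cb(1) by (intro mult_nonneg_nonneg) auto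
  have d1: "\<bar>t - x k\<bar> powr \<sigma> \<le> \<bar>t - x 1\<bar> powr \<sigma>"
    using k mono_x[of 1 k] Tk[of k] sigma by (intro powr_mono2) auto
  have dN: "\<bar>t - x (Suc k)\<bar> powr \<sigma> \<le> \<bar>t - x N\<bar> powr \<sigma>"
    using k mono_x[of "Suc k" N] Tk[of k] sigma t by (intro powr_mono2) (auto simp: Jint_def)
  have "norm (Tm g t - Tm g (x 1)) = norm ((f t - f (x 1)) + (Ek g k t - f t))"
    unfolding Tt T1 by simp
  also have "\<dots> \<le> Cf * \<bar>t - x 1\<bar> powr \<sigma> + q * (E + Cb) * \<bar>t - x k\<bar> powr \<sigma>"
    using Cf(2)[OF t x1J] phi_bound[OF g k, of "x k"] by (meson add_mono norm_triangle_le)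
  also have "\<dots> \<le> Cf * \<bar>t - x 1\<bar> powr \<sigma> + q * (E + Cb) * \<bar>t - x 1\<bar> powr \<sigma>"
    using d1 qE by (intro add_left_mono mult_left_mono) auto
  finally show "norm (Tm g t - Tm g (x 1)) \<le> (Cf + q * (E + Cb)) * \<bar>t - x 1\<bar> powr \<sigma>"
    by (simp add: algebra_simps)
  have "norm (Tm g t - Tm g (x N)) = norm ((f t - f (x N)) + (Ek g k t - f t))"
    unfolding Tt T1 by simp
  also have "\<dots> \<le> Cf * \<bar>t - x N\<bar> powr \<sigma> + q * (E + Cb) * \<bar>t - x (Suc k)\<bar> powr \<sigma>"
    using Cf(2)[OF t xNJ] phi_bound[OF g k, of "x (Suc k)"] by (meson add_mono norm_triangle_le)
  also have "\<dots> \<le> Cf * \<bar>t - x N\<bar> powr \<sigma> + q * (E + Cb) * \<bar>t - x N\<bar> powr \<sigma>"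
    using dN qE by (intro add_left_mono mult_left_mono) auto
  finally show "norm (Tm g t - Tm g (x N)) \<le> (Cf + q * (E + Cb)) * \<bar>t - x N\<bar> powr \<sigma>"
    by (simp add: algebra_simps)
qed

end


context fr begin

lemma L_same:
  assumes g: "Rb g" "Lb L g" "L \<ge> 0" and k: "k \<in> T" and t1: "t1 \<in> {x k .. x (Suc k)}" and t2: "t2 \<in> {x k .. x (Suc k)}"
  shows "norm (Ek g k t1 - Ek g k t2) \<le> (Cf + (Ca * R + A * Cb) / c powr \<sigma> + q * L) * \<bar>t1 - t2\<bar> powr \<sigma>"
proof -
  define s1 where "s1 = Pv k t1"
  define s2 where "s2 = Pv k t2"
  define D where "D = \<bar>t1 - t2\<bar> powr \<sigma>"
  define Ds where "Ds = \<bar>s1 - s2\<bar> powr \<sigma>"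
  have s: "s1 \<in> J" "s2 \<in> J" using Pi_in[OF k t1] Pi_in[OF k t2] by (auto simp: s1_def s2_def)
  have tJ: "t1 \<in> J" "t2 \<in> J" using Jk_sub[OF k t1] Jk_sub[OF k t2] .
  have DsD: "Ds \<le> D / c powr \<sigma>" using Pv_pow[OF k] by (simp add: Ds_def D_def s1_def s2_def)
  have Ds0: "Ds \<ge> 0" by (simp add: Ds_def)
  have eq: "Ek g k t1 - Ek g k t2 = (f t1 - f t2) + (\<alpha> k s1 - \<alpha> k s2) * (g s1 - b s1)
      + \<alpha> k s2 * ((g s1 - g s2) - (b s1 - b s2))"
    by (simp add: Ek_def s1_def s2_def algebra_simps)
  have n1: "norm (f t1 - f t2) \<le> Cf * D" using Cf(2)[OF tJ] by (simp add: D_def)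
  have n2: "norm ((\<alpha> k s1 - \<alpha> k s2) * (g s1 - b s1)) \<le> (Ca * Ds) * R"
    unfolding norm_mult using Ca(2)[OF k s] g(1) s(1) Ca(1) unfolding Rb_def Ds_def
    by (intro mult_mono) auto
  have n3a: "norm ((g s1 - g s2) - (b s1 - b s2)) \<le> L * Ds + Cb * Ds"
    using g(2) s Cb(2)[OF s] unfolding Lb_def Ds_def by (meson add_mono norm_triangle_ineq4 order_trans)
  have n3: "norm (\<alpha> k s2 * ((g s1 - g s2) - (b s1 - b s2))) \<le> A * (L * Ds + Cb * Ds)"
    unfolding norm_mult using A(3)[OF k s(2)] n3a A(1) by (intro mult_mono) auto
  have "norm (Ek g k t1 - Ek g k t2) \<le> Cf * D + (Ca * Ds) * R + A * (L * Ds + Cb * Ds)"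
    unfolding eq using n1 n2 n3 by (meson add_mono norm_triangle_le)
  also have "\<dots> = Cf * D + (Ca * R + A * (L + Cb)) * Ds" by (simp add: algebra_simps)
  also have "\<dots> \<le> Cf * D + (Ca * R + A * (L + Cb)) * (D / c powr \<sigma>)"
    using DsD Ca(1) R(1) A(1) g(3) Cb(1) by (intro add_left_mono mult_left_mono) auto
  also have "\<dots> = (Cf + (Ca * R + A * Cb) / c powr \<sigma> + q * L) * D"
    using cpow by (simp add: field_simps)
  finally show ?thesis by (simp add: D_def)
qed

lemma L_cross:
  assumes g: "endp g" "Eb E g" "E \<ge> 0" and k: "k1 \<in> T" "k2 \<in> T" "k1 < k2"
    and t1: "t1 \<in> {x k1 .. x (Suc k1)}" and t2: "t2 \<in> {x k2 .. x (Suc k2)}"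
  shows "norm (Ek g k1 t1 - Ek g k2 t2) \<le> (Cf + 2 * q * (E + Cb)) * \<bar>t1 - t2\<bar> powr \<sigma>"
proof -
  have tJ: "t1 \<in> J" "t2 \<in> J" using Jk_sub[OF k(1) t1] Jk_sub[OF k(2) t2] .
  have m: "x (Suc k1) \<le> x k2" using mono_x[of "Suc k1" k2] k Tk[of k1] Tk[of k2] by auto
  have qE: "q * (E + Cb) \<ge> 0" using q_nonneg g(3) Cb(1) by (intro mult_nonneg_nonneg) auto
  have d1: "\<bar>t1 - x (Suc k1)\<bar> powr \<sigma> \<le> \<bar>t1 - t2\<bar> powr \<sigma>"
    using t1 t2 m sigma by (intro powr_mono2) auto
  have d2: "\<bar>t2 - x k2\<bar> powr \<sigma> \<le> \<bar>t1 - t2\<bar> powr \<sigma>"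
    using t1 t2 m sigma by (intro powr_mono2) auto
  have eq: "Ek g k1 t1 - Ek g k2 t2 = (f t1 - f t2) + (Ek g k1 t1 - f t1) - (Ek g k2 t2 - f t2)"
    by simp
  have "norm (Ek g k1 t1 - Ek g k2 t2) \<le> Cf * \<bar>t1 - t2\<bar> powr \<sigma>
      + q * (E + Cb) * \<bar>t1 - x (Suc k1)\<bar> powr \<sigma> + q * (E + Cb) * \<bar>t2 - x k2\<bar> powr \<sigma>"
    unfolding eq using Cf(2)[OF tJ] phi_bound[OF g k(1) t1, of "x (Suc k1)"] phi_bound[OF g k(2) t2, of "x k2"]
    by (meson add_mono norm_triangle_ineq4 norm_triangle_le order_trans)
  also have "\<dots> \<le> Cf * \<bar>t1 - t2\<bar> powr \<sigma>
      + q * (E + Cb) * \<bar>t1 - t2\<bar> powr \<sigma> + q * (E + Cb) * \<bar>t1 - t2\<bar> powr \<sigma>"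
    using d1 d2 qE Cf(1) by (intro add_mono mult_left_mono) auto
  finally show ?thesis by (simp add: algebra_simps)
qed

lemma L_step:
  assumes g: "endp g" "Rb g" "Eb E g" "Lb L g" "E \<ge> 0" "L \<ge> 0"
  shows "Lb (max (Cf + 2 * q * (E + Cb)) (Cf + (Ca * R + A * Cb) / c powr \<sigma> + q * L)) (Tm g)"
  unfolding Lb_def
proof (intro ballI)
  fix t1 t2 assume t: "t1 \<in> J" "t2 \<in> J"
  define M where "M = max (Cf + 2 * q * (E + Cb)) (Cf + (Ca * R + A * Cb) / c powr \<sigma> + q * L)"
  define k1 where "k1 = kof t1"
  define k2 where "k2 = kof t2"
  have k1: "k1 \<in> T" "t1 \<in> {x k1 .. x (Suc k1)}" using kof[OF t(1)] by (auto simp: k1_def)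
  have k2: "k2 \<in> T" "t2 \<in> {x k2 .. x (Suc k2)}" using kof[OF t(2)] by (auto simp: k2_def)
  have Tt: "Tm g t1 = Ek g k1 t1" "Tm g t2 = Ek g k2 t2" by (simp_all add: Tm_def k1_def k2_def)
  have P0: "\<bar>t1 - t2\<bar> powr \<sigma> \<ge> 0" by simp
  have "norm (Tm g t1 - Tm g t2) \<le> M * \<bar>t1 - t2\<bar> powr \<sigma>"
  proof (cases k1 k2 rule: linorder_cases)
    case less
    have "norm (Tm g t1 - Tm g t2) \<le> (Cf + 2 * q * (E + Cb)) * \<bar>t1 - t2\<bar> powr \<sigma>"
      unfolding Tt using L_cross[OF g(1,3,5) k1(1) k2(1) less k1(2) k2(2)] .
    also have "\<dots> \<le> M * \<bar>t1 - t2\<bar> powr \<sigma>" using P0 by (intro mult_right_mono) (auto simp: M_def)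
    finally show ?thesis .
  next
    case equal
    have "norm (Tm g t1 - Tm g t2) \<le> (Cf + (Ca * R + A * Cb) / c powr \<sigma> + q * L) * \<bar>t1 - t2\<bar> powr \<sigma>"
      unfolding Tt using L_same[OF g(2,4,6) k1(1) k1(2)] k2(2) equal by simp
    also have "\<dots> \<le> M * \<bar>t1 - t2\<bar> powr \<sigma>" using P0 by (intro mult_right_mono) (auto simp: M_def)
    finally show ?thesis .
  next
    case greater
    have "norm (Tm g t1 - Tm g t2) = norm (Ek g k2 t2 - Ek g k1 t1)" unfolding Tt by (simp add: norm_minus_commute)
    also have "\<dots> \<le> (Cf + 2 * q * (E + Cb)) * \<bar>t2 - t1\<bar> powr \<sigma>"
      using L_cross[OF g(1,3,5) k2(1) k1(1) greater k2(2) k1(2)] .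
    also have "\<dots> = (Cf + 2 * q * (E + Cb)) * \<bar>t1 - t2\<bar> powr \<sigma>" by (simp add: abs_minus_commute)
    also have "\<dots> \<le> M * \<bar>t1 - t2\<bar> powr \<sigma>" using P0 by (intro mult_right_mono) (auto simp: M_def)
    finally show ?thesis .
  qed
  thus "norm (Tm g t1 - Tm g t2) \<le> max (Cf + 2 * q * (E + Cb)) (Cf + (Ca * R + A * Cb) / c powr \<sigma> + q * L) * \<bar>t1 - t2\<bar> powr \<sigma>"
    by (simp add: M_def)
qed

end


context fr begin

definition "E0 = max Cb ((Cf + q * Cb) / (1 - q))"
definition "L0 = max Cb (max (Cf + 2 * q * (E0 + Cb)) ((Cf + (Ca * R + A * Cb) / c powr \<sigma>) / (1 - q)))"
definition "hs n = (Tm ^^ n) b"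

lemma Eb_mono: "Eb E g \<Longrightarrow> E \<le> E' \<Longrightarrow> Eb E' g"
  unfolding Eb_def by (meson order_trans mult_right_mono powr_ge_zero)
lemma Lb_mono: "Lb L g \<Longrightarrow> L \<le> L' \<Longrightarrow> Lb L' g"
  unfolding Lb_def by (meson order_trans mult_right_mono powr_ge_zero)

lemma q1: "q < 1" using c(3) .

lemma E0_ge: "E0 \<ge> 0" "E0 \<ge> Cb" "Cf + q * (E0 + Cb) \<le> E0"
proof -
  show "E0 \<ge> Cb" by (simp add: E0_def)
  thus "E0 \<ge> 0" using Cb(1) by simp
  have "(Cf + q * Cb) / (1 - q) \<le> E0" by (simp add: E0_def)
  hence "Cf + q * Cb \<le> E0 * (1 - q)" using q1 by (simp add: pos_divide_le_eq)
  thus "Cf + q * (E0 + Cb) \<le> E0" by (simp add: algebra_simps)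
qed

lemma L0_ge: "L0 \<ge> 0" "L0 \<ge> Cb" "max (Cf + 2 * q * (E0 + Cb)) (Cf + (Ca * R + A * Cb) / c powr \<sigma> + q * L0) \<le> L0"
proof -
  show "L0 \<ge> Cb" by (simp add: L0_def)
  thus "L0 \<ge> 0" using Cb(1) by simp
  have "(Cf + (Ca * R + A * Cb) / c powr \<sigma>) / (1 - q) \<le> L0" by (simp add: L0_def)
  hence "Cf + (Ca * R + A * Cb) / c powr \<sigma> \<le> L0 * (1 - q)" using q1 by (simp add: pos_divide_le_eq)
  hence "Cf + (Ca * R + A * Cb) / c powr \<sigma> + q * L0 \<le> L0" by (simp add: algebra_simps)
  moreover have "Cf + 2 * q * (E0 + Cb) \<le> L0" by (simp add: L0_def)
  ultimately show "max (Cf + 2 * q * (E0 + Cb)) (Cf + (Ca * R + A * Cb) / c powr \<sigma> + q * L0) \<le> L0" by simp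
qed

lemma inv: "endp (hs n) \<and> Rb (hs n) \<and> Eb E0 (hs n) \<and> Lb L0 (hs n)"
proof (induction n)
  case 0
  have x1J: "x 1 \<in> J" and xNJ: "x N \<in> J" using x1N by (auto simp: Jint_def)
  have "Eb Cb b" unfolding Eb_def using Cb(2) x1J xNJ by auto
  moreover have "Lb Cb b" unfolding Lb_def using Cb(2) by auto
  ultimately show ?case using Eb_mono Lb_mono E0_ge L0_ge R(1)
    by (auto simp: hs_def endp_def Rb_def)
next
  case (Suc n)
  have h: "hs (Suc n) = Tm (hs n)" by (simp add: hs_def)
  show ?case unfolding h using Suc Tm_endp R_step
    E_step[of "hs n" E0] L_step[of "hs n" E0 L0] E0_ge L0_ge Eb_mono Lb_mono by blast
qed

lemma diff_bound: "t \<in> J \<Longrightarrow> norm (hs (Suc n) t - hs n t) \<le> A ^ n * R"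
proof (induction n arbitrary: t)
  case 0
  thus ?case using inv[of 1] by (simp add: hs_def Rb_def)
next
  case (Suc n)
  define k where "k = kof t"
  define s where "s = Pv k t"
  have k: "k \<in> T" "t \<in> {x k .. x (Suc k)}" using kof[OF Suc.prems] by (auto simp: k_def)
  have s: "s \<in> J" using Pi_in[OF k] by (simp add: s_def)
  have eq: "hs (Suc (Suc n)) t - hs (Suc n) t = \<alpha> k s * (hs (Suc n) s - hs n s)"
    by (simp add: hs_def Tm_def Ek_def k_def s_def algebra_simps)
  have "norm (hs (Suc (Suc n)) t - hs (Suc n) t) \<le> A * (A ^ n * R)"
    unfolding eq norm_mult using A(3)[OF k(1) s] Suc.IH[OF s] A(1) by (intro mult_mono) auto
  thus ?case by simp
qed

definition hl :: "real \<Rightarrow> complex" where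
  "hl t = (if t \<in> J then lim (\<lambda>n. hs n t) else 0)"

lemma conv: assumes t: "t \<in> J" shows "(\<lambda>n. hs n t) \<longlonglongrightarrow> hl t"
proof -
  have sg: "summable (\<lambda>n. A ^ n * R)" using A(1,2) by (intro summable_mult2 summable_geometric) auto
  have sd: "summable (\<lambda>i. hs (Suc i) t - hs i t)"
    by (rule summable_comparison_test'[OF sg]) (use diff_bound[OF t] in auto)
  have "(\<lambda>n. \<Sum>i<n. hs (Suc i) t - hs i t) \<longlonglongrightarrow> suminf (\<lambda>i. hs (Suc i) t - hs i t)"
    by (rule summable_LIMSEQ[OF sd])
  moreover have "(\<Sum>i<n. hs (Suc i) t - hs i t) = hs n t - hs 0 t" for n
    by (rule sum_lessThan_telescope[where f="\<lambda>n. hs n t"])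
  ultimately have "(\<lambda>n. hs n t - hs 0 t) \<longlonglongrightarrow> suminf (\<lambda>i. hs (Suc i) t - hs i t)"
    by simp
  hence "(\<lambda>n. (hs n t - hs 0 t) + hs 0 t) \<longlonglongrightarrow> suminf (\<lambda>i. hs (Suc i) t - hs i t) + hs 0 t"
    by (intro tendsto_add) auto
  hence "convergent (\<lambda>n. hs n t)" unfolding convergent_def by auto
  thus ?thesis using t by (simp add: hl_def convergent_LIMSEQ_iff)
qed

lemma hl_holder: "Lb L0 hl"
  unfolding Lb_def
proof (intro ballI)
  fix t1 t2 assume t: "t1 \<in> J" "t2 \<in> J"
  have "(\<lambda>n. norm (hs n t1 - hs n t2)) \<longlonglongrightarrow> norm (hl t1 - hl t2)"
    by (intro tendsto_norm tendsto_diff conv t)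
  moreover have "\<forall>n. norm (hs n t1 - hs n t2) \<le> L0 * \<bar>t1 - t2\<bar> powr \<sigma>"
    using inv t unfolding Lb_def by blast
  ultimately show "norm (hl t1 - hl t2) \<le> L0 * \<bar>t1 - t2\<bar> powr \<sigma>"
    by (intro LIMSEQ_le_const2) auto
qed

lemma hl_endp: "endp hl"
proof -
  have x1J: "x 1 \<in> J" and xNJ: "x N \<in> J" using x1N by (auto simp: Jint_def)
  have "(\<lambda>n. hs n (x 1)) \<longlonglongrightarrow> b (x 1)" "(\<lambda>n. hs n (x N)) \<longlonglongrightarrow> b (x N)"
    using inv unfolding endp_def by auto
  thus ?thesis using conv[OF x1J] conv[OF xNJ] LIMSEQ_unique unfolding endp_def by metis
qed

lemma hl_eq: "fractal_eq N x \<alpha> f b hl"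
  unfolding fractal_eq_def
proof (intro ballI)
  fix k t assume k: "k \<in> T" and t: "t \<in> {x k .. x (Suc k)}"
  have tJ: "t \<in> J" using Jk_sub[OF k t] .
  have s: "Pv k t \<in> J" using Pi_in[OF k t] .
  have "(\<lambda>n. hs (Suc n) t) \<longlonglongrightarrow> hl t" using conv[OF tJ] by (rule LIMSEQ_Suc)
  moreover have "hs (Suc n) t = Ek (hs n) k t" for n
    using Tm_eq[OF _ k t, of "hs n"] inv[of n] by (simp add: hs_def)
  moreover have "(\<lambda>n. Ek (hs n) k t) \<longlonglongrightarrow> Ek hl k t"
    unfolding Ek_def by (intro tendsto_intros conv s)
  ultimately have "hl t = Ek hl k t" using LIMSEQ_unique by fastforce
  thus "hl t = f t + \<alpha> k (Pv k t) * (hl (Pv k t) - b (Pv k t))" by (simp add: Ek_def)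
qed

end


context fr begin

lemma uniq:
  assumes h1: "continuous_on J h1" "fractal_eq N x \<alpha> f b h1"
    and h2: "continuous_on J h2" "fractal_eq N x \<alpha> f b h2"
    and t: "t \<in> J"
  shows "h1 t = h2 t"
proof -
  have cJ: "compact J" by (simp add: Jint_def)
  obtain B where B: "\<forall>t\<in>J. norm (h1 t - h2 t) \<le> B"
    using cont_bounded[OF continuous_on_diff[OF h1(1) h2(1)] cJ] by blast
  have bnd: "\<forall>t\<in>J. norm (h1 t - h2 t) \<le> A ^ n * B" for n
  proof (induction n)
    case 0 thus ?case using B by simp
  next
    case (Suc n)
    show ?case
    proof
      fix t assume t: "t \<in> J"
      obtain k where k: "k \<in> T" "t \<in> {x k .. x (Suc k)}" using cover[OF t] by blast
      define s where "s = Pv k t"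
      have s: "s \<in> J" using Pi_in[OF k] by (simp add: s_def)
      have e1: "h1 t = f t + \<alpha> k s * (h1 s - b s)" using h1(2) k unfolding fractal_eq_def s_def by blast
      have e2: "h2 t = f t + \<alpha> k s * (h2 s - b s)" using h2(2) k unfolding fractal_eq_def s_def by blast
      have "h1 t - h2 t = \<alpha> k s * (h1 s - h2 s)"
        unfolding e1 e2 by (simp add: algebra_simps)
      moreover have "norm (\<alpha> k s * (h1 s - h2 s)) \<le> A * (A ^ n * B)"
        unfolding norm_mult using A(3)[OF k(1) s] Suc.IH s A(1) by (intro mult_mono) auto
      ultimately have "norm (h1 t - h2 t) \<le> A * (A ^ n * B)" by simp
      thus "norm (h1 t - h2 t) \<le> A ^ Suc n * B" by simp
    qed
  qed
  have "(\<lambda>n. A ^ n * B) \<longlonglongrightarrow> 0 * B"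
    using A(1,2) by (intro tendsto_mult LIMSEQ_power_zero tendsto_const) auto
  hence "norm (h1 t - h2 t) \<le> 0" using bnd t by (intro LIMSEQ_le_const[of _ 0]) auto
  thus ?thesis by simp
qed

lemma result: "holder_on \<sigma> J (fractal_function N x \<alpha> f b)"
proof -
  have hc: "continuous_on J hl"
    by (rule holder_cont[OF _ sigma(1)]) (use hl_holder in \<open>auto simp: Lb_def holder_on_def\<close>)
  have z: "\<forall>t. t \<notin> J \<longrightarrow> hl t = 0" by (simp add: hl_def)
  have "fractal_function N x \<alpha> f b = hl"
    unfolding fractal_function_def
  proof (rule the_equality)
    show "continuous_on J hl \<and> fractal_eq N x \<alpha> f b hl \<and> (\<forall>t. t \<notin> J \<longrightarrow> hl t = 0)"
      using hc hl_eq z by blast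
  next
    fix h assume h: "continuous_on J h \<and> fractal_eq N x \<alpha> f b h \<and> (\<forall>t. t \<notin> J \<longrightarrow> h t = 0)"
    show "h = hl"
    proof
      fix t show "h t = hl t"
        using uniq[of h hl t] h hc hl_eq z by (cases "t \<in> J") auto
    qed
  qed
  thus ?thesis using hl_holder by (auto simp: Lb_def holder_on_def)
qed

end


theorem mainTheorem7:
  fixes \<sigma> :: real and N :: nat and x :: "nat \<Rightarrow> real"
    and f b :: "real \<Rightarrow> complex" and \<alpha> :: "nat \<Rightarrow> real \<Rightarrow> complex"
  assumes sigma: "0 < \<sigma>" "\<sigma> \<le> 1"
    and N: "N \<ge> 2"
    and incr: "\<And>i j. 1 \<le> i \<Longrightarrow> i < j \<Longrightarrow> j \<le> N \<Longrightarrow> x i < x j"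
    and f_holder: "holder_on \<sigma> (Jint N x) f"
    and b_holder: "holder_on \<sigma> (Jint N x) b"
    and alpha_holder: "\<And>k. k \<in> Tset N \<Longrightarrow> holder_on \<sigma> (Jint N x) (\<alpha> k)"
    and b_left: "b (x 1) = f (x 1)"
    and b_right: "b (x N) = f (x N)"
    and b_ne_f: "\<exists>t\<in>Jint N x. b t \<noteq> f t"
    and alpha_lt1: "\<And>k. k \<in> Tset N \<Longrightarrow> sup_norm_on (Jint N x) (\<alpha> k) < 1"
    and contr: "alpha_holder_norm \<sigma> N x \<alpha> / (Min (a_coef N x ` Tset N)) powr \<sigma> < 1"
  shows "holder_on \<sigma> (Jint N x) (fractal_function N x \<alpha> f b)"
proof -
  define J where "J = Jint N x"
  define T where "T = Tset N"
  have x1N: "x 1 < x N" using incr[of 1 N] N by auto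
  have x1J: "x 1 \<in> J" and xNJ: "x N \<in> J" using x1N by (auto simp: J_def Jint_def)
  have cJ: "compact J" by (simp add: J_def Jint_def)
  have finT: "finite T" and T1: "1 \<in> T" and neT: "T \<noteq> {}" using N by (auto simp: T_def Tset_def)
  obtain Cf where Cf: "Cf \<ge> 0" "\<forall>t1\<in>J. \<forall>t2\<in>J. norm (f t1 - f t2) \<le> Cf * \<bar>t1 - t2\<bar> powr \<sigma>"
    using holder_nonneg[OF f_holder] unfolding J_def by blast
  obtain Cb where Cb: "Cb \<ge> 0" "\<forall>t1\<in>J. \<forall>t2\<in>J. norm (b t1 - b t2) \<le> Cb * \<bar>t1 - t2\<bar> powr \<sigma>"
    using holder_nonneg[OF b_holder] unfolding J_def by blast
  have "\<forall>k\<in>T. \<exists>C\<ge>0. \<forall>t1\<in>J. \<forall>t2\<in>J. norm (\<alpha> k t1 - \<alpha> k t2) \<le> C * \<bar>t1 - t2\<bar> powr \<sigma>"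
    using holder_nonneg[OF alpha_holder] unfolding J_def T_def by blast
  then obtain Ck where Ck: "\<And>k. k \<in> T \<Longrightarrow> Ck k \<ge> 0 \<and> (\<forall>t1\<in>J. \<forall>t2\<in>J. norm (\<alpha> k t1 - \<alpha> k t2) \<le> Ck k * \<bar>t1 - t2\<bar> powr \<sigma>)"
    by metis
  define Ca where "Ca = (\<Sum>k\<in>T. Ck k)"
  have Ca0: "Ca \<ge> 0" unfolding Ca_def using Ck by (intro sum_nonneg) auto
  have Ca: "norm (\<alpha> k t1 - \<alpha> k t2) \<le> Ca * \<bar>t1 - t2\<bar> powr \<sigma>" if "k \<in> T" "t1 \<in> J" "t2 \<in> J" for k t1 t2
  proof -
    have "Ck k \<le> Ca" unfolding Ca_def using Ck that(1) finT by (intro member_le_sum) auto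
    hence "Ck k * \<bar>t1 - t2\<bar> powr \<sigma> \<le> Ca * \<bar>t1 - t2\<bar> powr \<sigma>" by (intro mult_right_mono) auto
    thus ?thesis using Ck that by (meson order_trans)
  qed
  define c where "c = Min (a_coef N x ` T)"
  have apos: "a_coef N x k > 0" if "k \<in> T" for k
    using that incr[of k "Suc k"] x1N by (auto simp: a_coef_def T_def Tset_def)
  have c_le: "c \<le> a_coef N x k" if "k \<in> T" for k unfolding c_def using finT that by auto
  have c_pos: "c > 0"
  proof -
    have "c \<in> a_coef N x ` T" unfolding c_def using finT neT by (intro Min_in) auto
    thus ?thesis using apos by auto
  qed
  define A where "A = alpha_sup_norm N x \<alpha>"
  have bddA: "bdd_above ((\<lambda>t. norm (\<alpha> k t)) ` J)" if "k \<in> T" for k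
  proof -
    have kT: "k \<in> Tset N" using that by (simp add: T_def)
    obtain B where "\<forall>t\<in>J. norm (\<alpha> k t) \<le> B"
      using cont_bounded[OF holder_cont[OF alpha_holder[OF kT] sigma(1)] cJ[unfolded J_def]]
      unfolding J_def by blast
    thus ?thesis by (intro bdd_aboveI2) auto
  qed
  have supA: "sup_norm_on J (\<alpha> k) \<le> A" if "k \<in> T" for k
    unfolding A_def alpha_sup_norm_def J_def using that finT by (auto simp: T_def)
  have Abnd: "norm (\<alpha> k t) \<le> A" if "k \<in> T" "t \<in> J" for k t
  proof -
    have "norm (\<alpha> k t) \<le> sup_norm_on J (\<alpha> k)"
      unfolding sup_norm_on_def using bddA[OF that(1)] that(2) by (rule cSUP_upper2) auto
    thus ?thesis using supA[OF that(1)] by simp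
  qed
  have A0: "A \<ge> 0" using Abnd[OF T1 x1J] norm_ge_zero order_trans by blast
  have A1: "A < 1"
  proof -
    have "A \<in> (\<lambda>k. sup_norm_on (Jint N x) (\<alpha> k)) ` Tset N"
      unfolding A_def alpha_sup_norm_def using finT neT by (intro Max_in) (auto simp: T_def)
    thus ?thesis using alpha_lt1 by auto
  qed
  have semi0: "holder_seminorm \<sigma> J (\<alpha> 1) \<ge> 0"
  proof -
    obtain C where C: "\<forall>t1\<in>J. \<forall>t2\<in>J. norm (\<alpha> 1 t1 - \<alpha> 1 t2) \<le> C * \<bar>t1 - t2\<bar> powr \<sigma>"
      using Ck[OF T1] by blast
    let ?S = "{(t1,t2). t1 \<in> J \<and> t2 \<in> J \<and> t1 \<noteq> t2}"
    let ?F = "\<lambda>p. norm (\<alpha> 1 (fst p) - \<alpha> 1 (snd p)) / \<bar>fst p - snd p\<bar> powr \<sigma>"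
    have "?F p \<le> C" if "p \<in> ?S" for p
    proof -
      have "\<bar>fst p - snd p\<bar> powr \<sigma> > 0" using that by auto
      thus ?thesis using C that by (auto simp: pos_divide_le_eq)
    qed
    hence bdd: "bdd_above (?F ` ?S)" by (intro bdd_aboveI2) auto
    have mem: "(x 1, x N) \<in> ?S" using x1J xNJ x1N by auto
    have "?F (x 1, x N) \<le> (SUP p\<in>?S. ?F p)" by (rule cSUP_upper[OF mem bdd])
    moreover have "?F (x 1, x N) \<ge> 0" by simp
    ultimately show ?thesis unfolding holder_seminorm_def by linarith
  qed
  have "alpha_holder_seminorm \<sigma> N x \<alpha> \<ge> holder_seminorm \<sigma> J (\<alpha> 1)"
    unfolding alpha_holder_seminorm_def J_def using finT T1 by (auto simp: T_def)
  hence "A \<le> alpha_holder_norm \<sigma> N x \<alpha>" using semi0 by (simp add: alpha_holder_norm_def A_def)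
  hence "A / c powr \<sigma> \<le> alpha_holder_norm \<sigma> N x \<alpha> / c powr \<sigma>"
    using c_pos by (intro divide_right_mono) auto
  hence q1: "A / c powr \<sigma> < 1" using contr unfolding c_def T_def by linarith
  obtain Bfb where Bfb: "\<forall>t\<in>J. norm (f t - b t) \<le> Bfb"
    using cont_bounded[OF continuous_on_diff[OF holder_cont[OF f_holder sigma(1)] holder_cont[OF b_holder sigma(1)]] cJ[unfolded J_def]]
    unfolding J_def by blast
  define R where "R = max 0 Bfb / (1 - A)"
  have R0: "R \<ge> 0" using A1 by (simp add: R_def)
  have RR: "(1 - A) * R = max 0 Bfb" using A1 by (simp add: R_def)
  interpret fr \<sigma> N x f b \<alpha> A c Cf Cb Ca R
  proof
    show "0 < \<sigma>" "\<sigma> \<le> 1" "N \<ge> 2" using sigma N by auto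
  qed (use incr Cf Cb Ca0 Ca A0 A1 Abnd c_pos c_le q1 R0 RR Bfb b_left b_right in \<open>auto simp: J_def T_def\<close>)
  show ?thesis by (rule result)
qed


end
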